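(* For a category $\mathbf C$ the following are equivalent: (1) $\mathbf C$ is $C$-discrete; (2) there is a final functor $S\to\mathbf C$ from a large discrete category $S$; (3) there is a large set $S$ of objects of $\mathbf C$ such that every object $c$ of $\mathbf C$ admits exactly one morphism from $c$ whose codomain lies in $S$. Moreover, when these hold, the large set $S$ in (2) or (3) is in bijection with the set of objects of a skeleton of $\mathrm{Max}(\mathbf C)$.
   Context: An object $m$ of a category $\mathbf C$ is maximal if every pair of parallel morphisms $f,g:m\to c$ (not necessarily distinct) has a common retraction, i.e. there is $h:c\to m$ with $f;h=\mathrm{id}_m=g;h$. $\mathrm{Max}(\mathbf C)$ denotes the full subcategory of maximal objects. $\mathbf C$ is $C$-discrete if the isomorphism classes of objects of $\mathrm{Max}(\mathbf C)$ form a large set (a set in the second universe of a fixed chain of Grothendieck universes) and the inclusion functor $\mathrm{Max}(\mathbf C)\hookrightarrow\mathbf C$ is final. A functor $\Phi:\mathbf D\to\mathbf C$ is final if for every object $c$ of $\mathbf C$ the comma category $c/\Phi$ is nonempty and connected. *)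

theory Defs
  imports Main
begin

text \<open>A (small-or-large) category presented by its objects, arrows, domain/codomain,
  identities and composition in diagrammatic order: Comp f g = f;g (first f, then g).\<close>
record ('o, 'a) cat =
  Ob   :: "'o set"
  Ar   :: "'a set"
  Dom  :: "'a \<Rightarrow> 'o"
  Cod  :: "'a \<Rightarrow> 'o"
  Idm  :: "'o \<Rightarrow> 'a"
  Comp :: "'a \<Rightarrow> 'a \<Rightarrow> 'a"

definition hom :: "('o, 'a) cat \<Rightarrow> 'o \<Rightarrow> 'o \<Rightarrow> 'a set" where
  "hom C x y = {f \<in> Ar C. Dom C f = x \<and> Cod C f = y}"

definition category :: "('o, 'a) cat \<Rightarrow> bool" where
  "category C \<longleftrightarrow>
     (\<forall>f\<in>Ar C. Dom C f \<in> Ob C \<and> Cod C f \<in> Ob C) \<and>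
     (\<forall>x\<in>Ob C. Idm C x \<in> hom C x x) \<and>
     (\<forall>f\<in>Ar C. \<forall>g\<in>Ar C. Cod C f = Dom C g \<longrightarrow> Comp C f g \<in> hom C (Dom C f) (Cod C g)) \<and>
     (\<forall>f\<in>Ar C. Comp C (Idm C (Dom C f)) f = f \<and> Comp C f (Idm C (Cod C f)) = f) \<and>
     (\<forall>f\<in>Ar C. \<forall>g\<in>Ar C. \<forall>h\<in>Ar C. Cod C f = Dom C g \<and> Cod C g = Dom C h \<longrightarrow>
         Comp C (Comp C f g) h = Comp C f (Comp C g h))"

definition is_functor :: "('p, 'b) cat \<Rightarrow> ('o, 'a) cat \<Rightarrow> ('p \<Rightarrow> 'o) \<Rightarrow> ('b \<Rightarrow> 'a) \<Rightarrow> bool" where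
  "is_functor D C Fo Fa \<longleftrightarrow>
     category D \<and> category C \<and>
     (\<forall>x\<in>Ob D. Fo x \<in> Ob C) \<and>
     (\<forall>u\<in>Ar D. Fa u \<in> hom C (Fo (Dom D u)) (Fo (Cod D u))) \<and>
     (\<forall>x\<in>Ob D. Fa (Idm D x) = Idm C (Fo x)) \<and>
     (\<forall>u\<in>Ar D. \<forall>v\<in>Ar D. Cod D u = Dom D v \<longrightarrow> Fa (Comp D u v) = Comp C (Fa u) (Fa v))"

definition comma_ob :: "('p, 'b) cat \<Rightarrow> ('o, 'a) cat \<Rightarrow> ('p \<Rightarrow> 'o) \<Rightarrow> 'o \<Rightarrow> ('p \<times> 'a) set" where
  "comma_ob D C Fo c = {(d, f). d \<in> Ob D \<and> f \<in> hom C c (Fo d)}"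

definition comma_rel :: "('p, 'b) cat \<Rightarrow> ('o, 'a) cat \<Rightarrow> ('p \<Rightarrow> 'o) \<Rightarrow> ('b \<Rightarrow> 'a) \<Rightarrow> 'o
    \<Rightarrow> (('p \<times> 'a) \<times> ('p \<times> 'a)) set" where
  "comma_rel D C Fo Fa c =
     {((d, f), (d', f')). (d, f) \<in> comma_ob D C Fo c \<and> (d', f') \<in> comma_ob D C Fo c \<and>
        (\<exists>u\<in>hom D d d'. Comp C f (Fa u) = f')}"

text \<open>Final is_functor: every comma category c/\<Phi> is nonempty and connected (any two objects
  are linked by a finite zig-zag of morphisms).\<close>
definition final :: "('p, 'b) cat \<Rightarrow> ('o, 'a) cat \<Rightarrow> ('p \<Rightarrow> 'o) \<Rightarrow> ('b \<Rightarrow> 'a) \<Rightarrow> bool" where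
  "final D C Fo Fa \<longleftrightarrow> is_functor D C Fo Fa \<and>
     (\<forall>c\<in>Ob C. comma_ob D C Fo c \<noteq> {} \<and>
        (\<forall>x\<in>comma_ob D C Fo c. \<forall>y\<in>comma_ob D C Fo c.
           (x, y) \<in> (comma_rel D C Fo Fa c \<union> (comma_rel D C Fo Fa c)\<inverse>)\<^sup>*))"

definition maximal :: "('o, 'a) cat \<Rightarrow> 'o \<Rightarrow> bool" where
  "maximal C m \<longleftrightarrow> m \<in> Ob C \<and>
     (\<forall>c f g. f \<in> hom C m c \<and> g \<in> hom C m c \<longrightarrow>
        (\<exists>h\<in>hom C c m. Comp C f h = Idm C m \<and> Comp C g h = Idm C m))"

definition MaxCat :: "('o, 'a) cat \<Rightarrow> ('o, 'a) cat" where
  "MaxCat C = \<lparr> Ob = {m. maximal C m},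
                Ar = {f \<in> Ar C. maximal C (Dom C f) \<and> maximal C (Cod C f)},
                Dom = Dom C, Cod = Cod C, Idm = Idm C, Comp = Comp C \<rparr>"

definition isomorphic :: "('o, 'a) cat \<Rightarrow> 'o \<Rightarrow> 'o \<Rightarrow> bool" where
  "isomorphic C x y \<longleftrightarrow> (\<exists>f\<in>hom C x y. \<exists>g\<in>hom C y x.
      Comp C f g = Idm C x \<and> Comp C g f = Idm C y)"

definition iso_classes :: "('o, 'a) cat \<Rightarrow> 'o set set" where
  "iso_classes C = {{y \<in> Ob C. isomorphic C x y} | x. x \<in> Ob C}"

definition skeleton_obs :: "('o, 'a) cat \<Rightarrow> 'o set \<Rightarrow> bool" where
  "skeleton_obs C R \<longleftrightarrow> R \<subseteq> Ob C \<and>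
     (\<forall>x\<in>Ob C. \<exists>r\<in>R. isomorphic C x r) \<and>
     (\<forall>r\<in>R. \<forall>r'\<in>R. isomorphic C r r' \<longrightarrow> r = r')"

text \<open>"Large set": a set of size at most that of the fixed second universe, modelled by a
  fixed parameter set U (injectability into U).\<close>
definition large :: "'u set \<Rightarrow> 'x set \<Rightarrow> bool" where
  "large U X \<longleftrightarrow> (\<exists>f. inj_on f X \<and> f ` X \<subseteq> U)"

definition C_discrete :: "'u set \<Rightarrow> ('o, 'a) cat \<Rightarrow> bool" where
  "C_discrete U C \<longleftrightarrow> large U (iso_classes (MaxCat C)) \<and> final (MaxCat C) C id id"

definition discrete_cat :: "'s set \<Rightarrow> ('s, 's) cat" where
  "discrete_cat S = \<lparr> Ob = S, Ar = S, Dom = id, Cod = id, Idm = id, Comp = (\<lambda>f g. f) \<rparr>"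

end

theory Submission
  imports Defs
begin

definition uniq_arrow :: "('o,'a) cat \<Rightarrow> 'o set \<Rightarrow> bool" where
  "uniq_arrow C T \<longleftrightarrow> T \<subseteq> Ob C \<and> (\<forall>c\<in>Ob C. \<exists>!f. f \<in> Ar C \<and> Dom C f = c \<and> Cod C f \<in> T)"

lemma comma_rel_iff: "((d,h),(d',h')) \<in> comma_rel D C Fo Fa c \<longleftrightarrow>
   (d,h) \<in> comma_ob D C Fo c \<and> (d',h') \<in> comma_ob D C Fo c \<and> (\<exists>u\<in>hom D d d'. Comp C h (Fa u) = h')"
  unfolding comma_rel_def by simp

lemma MaxCat_simps: "Ob (MaxCat C) = {m. maximal C m}"
  "Ar (MaxCat C) = {f \<in> Ar C. maximal C (Dom C f) \<and> maximal C (Cod C f)}"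
  "Dom (MaxCat C) = Dom C" "Cod (MaxCat C) = Cod C" "Idm (MaxCat C) = Idm C" "Comp (MaxCat C) = Comp C"
  unfolding MaxCat_def by simp_all

locale cat_ax =
  fixes C :: "('o,'a) cat"
  assumes cat: "category C"
begin

lemma dc: "f \<in> Ar C \<Longrightarrow> Dom C f \<in> Ob C \<and> Cod C f \<in> Ob C"
  using cat unfolding category_def by blast
lemma idm: "x \<in> Ob C \<Longrightarrow> Idm C x \<in> Ar C \<and> Dom C (Idm C x) = x \<and> Cod C (Idm C x) = x"
  using cat unfolding category_def hom_def by blast
lemma comp: "f \<in> Ar C \<Longrightarrow> g \<in> Ar C \<Longrightarrow> Cod C f = Dom C g \<Longrightarrow>
   Comp C f g \<in> Ar C \<and> Dom C (Comp C f g) = Dom C f \<and> Cod C (Comp C f g) = Cod C g"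
  using cat unfolding category_def hom_def by blast
lemma idl: "f \<in> Ar C \<Longrightarrow> Comp C (Idm C (Dom C f)) f = f"
  using cat unfolding category_def by blast
lemma idr: "f \<in> Ar C \<Longrightarrow> Comp C f (Idm C (Cod C f)) = f"
  using cat unfolding category_def by blast
lemma assoc: "f \<in> Ar C \<Longrightarrow> g \<in> Ar C \<Longrightarrow> h \<in> Ar C \<Longrightarrow> Cod C f = Dom C g \<Longrightarrow> Cod C g = Dom C h \<Longrightarrow>
   Comp C (Comp C f g) h = Comp C f (Comp C g h)"
  using cat unfolding category_def by blast

lemma iso_refl: "x \<in> Ob C \<Longrightarrow> isomorphic C x x"
  unfolding isomorphic_def hom_def using idm idl by fastforce

lemma iso_sym: "isomorphic C x y \<Longrightarrow> isomorphic C y x"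
  unfolding isomorphic_def by blast

lemma iso_trans: assumes "isomorphic C x y" "isomorphic C y z" shows "isomorphic C x z"
proof -
  obtain f g where f: "f \<in> hom C x y" and g: "g \<in> hom C y x" and fg: "Comp C f g = Idm C x" "Comp C g f = Idm C y"
    using assms(1) unfolding isomorphic_def by blast
  obtain f' g' where f': "f' \<in> hom C y z" and g': "g' \<in> hom C z y" and fg': "Comp C f' g' = Idm C y" "Comp C g' f' = Idm C z"
    using assms(2) unfolding isomorphic_def by blast
  have F: "f \<in> Ar C" "Dom C f = x" "Cod C f = y" using f unfolding hom_def by auto
  have G: "g \<in> Ar C" "Dom C g = y" "Cod C g = x" using g unfolding hom_def by auto
  have F': "f' \<in> Ar C" "Dom C f' = y" "Cod C f' = z" using f' unfolding hom_def by auto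
  have G': "g' \<in> Ar C" "Dom C g' = z" "Cod C g' = y" using g' unfolding hom_def by auto
  have ff: "Comp C f f' \<in> Ar C" "Dom C (Comp C f f') = x" "Cod C (Comp C f f') = z"
    using comp[of f f'] F F' by auto
  have gg: "Comp C g' g \<in> Ar C" "Dom C (Comp C g' g) = z" "Cod C (Comp C g' g) = x"
    using comp[of g' g] G G' by auto
  have "Comp C (Comp C f f') (Comp C g' g) = Comp C f (Comp C f' (Comp C g' g))"
    using assoc[of f f' "Comp C g' g"] F F' gg by simp
  also have "\<dots> = Comp C f (Comp C (Comp C f' g') g)"
    using assoc[of f' g' g] F' G' G by simp
  also have "\<dots> = Comp C f g" using fg'(1) idl[of g] G by simp
  finally have e1: "Comp C (Comp C f f') (Comp C g' g) = Idm C x" using fg by simp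
  have "Comp C (Comp C g' g) (Comp C f f') = Comp C g' (Comp C g (Comp C f f'))"
    using assoc[of g' g "Comp C f f'"] G G' ff by simp
  also have "\<dots> = Comp C g' (Comp C (Comp C g f) f')"
    using assoc[of g f f'] G F F' by simp
  also have "\<dots> = Comp C g' f'" using fg(2) idl[of f'] F' by simp
  finally have e2: "Comp C (Comp C g' g) (Comp C f f') = Idm C z" using fg' by simp
  have "Comp C f f' \<in> hom C x z" "Comp C g' g \<in> hom C z x" using ff gg unfolding hom_def by auto
  then show ?thesis unfolding isomorphic_def using e1 e2 by blast
qed

lemma max_endo: assumes "maximal C m" "f \<in> hom C m m" shows "f = Idm C m"
proof -
  have m: "m \<in> Ob C" using assms unfolding maximal_def by blast
  have "Idm C m \<in> hom C m m" using idm m unfolding hom_def by auto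
  then obtain h where h: "h \<in> hom C m m" "Comp C f h = Idm C m" "Comp C (Idm C m) h = Idm C m"
    using assms unfolding maximal_def by blast
  have "h = Idm C m" using h idl unfolding hom_def by auto
  then have e: "Comp C f (Idm C m) = Idm C m" using h by simp
  have fa: "f \<in> Ar C" "Cod C f = m" using assms(2) unfolding hom_def by auto
  moreover have "Comp C f (Idm C m) = f" using idr[of f] fa by simp
  ultimately show ?thesis using e by simp
qed

lemma max_iso: assumes "maximal C m" "maximal C m'" "f \<in> hom C m m'"
  shows "\<exists>h\<in>hom C m' m. Comp C f h = Idm C m \<and> Comp C h f = Idm C m'"
proof -
  obtain h where h: "h \<in> hom C m' m" "Comp C f h = Idm C m"
    using assms unfolding maximal_def by blast
  have "Comp C h f \<in> hom C m' m'" using h assms comp unfolding hom_def by auto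
  then have "Comp C h f = Idm C m'" using max_endo assms by blast
  then show ?thesis using h by blast
qed

lemma Max_cat: "category (MaxCat C)"
proof -
  have mo: "maximal C m \<Longrightarrow> m \<in> Ob C" for m unfolding maximal_def by blast
  have A: "Ar (MaxCat C) = {f \<in> Ar C. maximal C (Dom C f) \<and> maximal C (Cod C f)}"
    and O: "Ob (MaxCat C) = {m. maximal C m}" and D: "Dom (MaxCat C) = Dom C"
    and Cd: "Cod (MaxCat C) = Cod C" and I: "Idm (MaxCat C) = Idm C" and Cp: "Comp (MaxCat C) = Comp C"
    unfolding MaxCat_def by simp_all
  show ?thesis unfolding category_def hom_def A O D Cd I Cp
  proof (intro conjI ballI impI)
    show "\<And>x. x \<in> {m. maximal C m} \<Longrightarrow> Idm C x \<in> {f \<in> {f \<in> Ar C. maximal C (Dom C f) \<and> maximal C (Cod C f)}. Dom C f = x \<and> Cod C f = x}"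
      using idm mo by auto
    show "\<And>f g. f \<in> {f \<in> Ar C. maximal C (Dom C f) \<and> maximal C (Cod C f)} \<Longrightarrow>
           g \<in> {f \<in> Ar C. maximal C (Dom C f) \<and> maximal C (Cod C f)} \<Longrightarrow> Cod C f = Dom C g \<Longrightarrow>
           Comp C f g \<in> {fa \<in> {f \<in> Ar C. maximal C (Dom C f) \<and> maximal C (Cod C f)}. Dom C fa = Dom C f \<and> Cod C fa = Cod C g}"
      using comp by auto
  qed (use idl idr assoc in auto)
qed

lemma homM: "hom (MaxCat C) x y = {u \<in> hom C x y. maximal C x \<and> maximal C y}"
  unfolding hom_def MaxCat_def by auto

lemma isoM: "isomorphic (MaxCat C) x y \<longleftrightarrow> maximal C x \<and> maximal C y \<and> isomorphic C x y"
proof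
  assume "isomorphic (MaxCat C) x y"
  then show "maximal C x \<and> maximal C y \<and> isomorphic C x y"
    unfolding isomorphic_def MaxCat_def hom_def by auto
next
  assume a: "maximal C x \<and> maximal C y \<and> isomorphic C x y"
  then obtain f g where "f \<in> hom C x y" "g \<in> hom C y x" "Comp C f g = Idm C x" "Comp C g f = Idm C y"
    unfolding isomorphic_def by blast
  then show "isomorphic (MaxCat C) x y" using a
    unfolding isomorphic_def MaxCat_def hom_def by (intro bexI[of _ f] bexI[of _ g]) auto
qed

lemma P_uniq: assumes "uniq_arrow C T" "x \<in> Ar C" "y \<in> Ar C" "Dom C x = Dom C y" "Cod C x \<in> T" "Cod C y \<in> T"
  shows "x = y"
proof -
  have "Dom C x \<in> Ob C" using dc assms by blast
  then show ?thesis using assms unfolding uniq_arrow_def by metis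
qed

lemma P_ex: assumes "uniq_arrow C T" "c \<in> Ob C" shows "\<exists>k. k \<in> Ar C \<and> Dom C k = c \<and> Cod C k \<in> T"
  using assms unfolding uniq_arrow_def by blast

lemma P_sub: "uniq_arrow C T \<Longrightarrow> T \<subseteq> Ob C" unfolding uniq_arrow_def by blast

lemma P_max: assumes P: "uniq_arrow C T" and tT: "t \<in> T" shows "maximal C t"
proof -
  have t: "t \<in> Ob C" using P_sub[OF P] tT by blast
  show ?thesis unfolding maximal_def
  proof (intro conjI allI impI t)
    fix c f g assume fg: "f \<in> hom C t c \<and> g \<in> hom C t c"
    then have f: "f \<in> Ar C" "Dom C f = t" "Cod C f = c" and g: "g \<in> Ar C" "Dom C g = t" "Cod C g = c"
      unfolding hom_def by auto
    have c: "c \<in> Ob C" using dc f by blast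
    obtain k where k: "k \<in> Ar C" "Dom C k = c" "Cod C k \<in> T" using P_ex[OF P c] by blast
    have it: "Idm C t \<in> Ar C" "Dom C (Idm C t) = t" "Cod C (Idm C t) = t" using idm t by auto
    have e1: "Comp C f k = Idm C t"
      using P_uniq[OF P, of "Comp C f k" "Idm C t"] comp[of f k] f k it tT by auto
    have e2: "Comp C g k = Idm C t"
      using P_uniq[OF P, of "Comp C g k" "Idm C t"] comp[of g k] g k it tT by auto
    have "Cod C k = t" using comp[of f k] f k e1 it by auto
    then show "\<exists>h\<in>hom C c t. Comp C f h = Idm C t \<and> Comp C g h = Idm C t"
      using k e1 e2 unfolding hom_def by auto
  qed
qed

lemma P_iso: assumes P: "uniq_arrow C T" and m: "maximal C m" shows "\<exists>t\<in>T. isomorphic C m t"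
proof -
  have mo: "m \<in> Ob C" using m unfolding maximal_def by blast
  obtain k where k: "k \<in> Ar C" "Dom C k = m" "Cod C k \<in> T" using P_ex[OF P mo] by blast
  have "maximal C (Cod C k)" using P_max[OF P k(3)] .
  then obtain h where "h \<in> hom C (Cod C k) m" "Comp C k h = Idm C m" "Comp C h k = Idm C (Cod C k)"
    using max_iso[OF m, of "Cod C k" k] k unfolding hom_def by auto
  then show ?thesis using k unfolding isomorphic_def hom_def by blast
qed

lemma P_eq: assumes P: "uniq_arrow C T" "t \<in> T" "t' \<in> T" "isomorphic C t t'" shows "t = t'"
proof -
  obtain f where f: "f \<in> Ar C" "Dom C f = t" "Cod C f = t'" using assms(4) unfolding isomorphic_def hom_def by blast
  have t: "t \<in> Ob C" using dc f by blast
  have "f = Idm C t" using P_uniq[OF P(1), of f "Idm C t"] f idm[OF t] assms by auto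
  then show ?thesis using f idm[OF t] by auto
qed

lemma P_skel: assumes P: "uniq_arrow C T" shows "skeleton_obs (MaxCat C) T"
  unfolding skeleton_obs_def
proof (intro conjI ballI)
  show "T \<subseteq> Ob (MaxCat C)" using P_max[OF P] unfolding MaxCat_def by auto
next
  fix x assume "x \<in> Ob (MaxCat C)"
  then have x: "maximal C x" unfolding MaxCat_def by auto
  then obtain t where "t \<in> T" "isomorphic C x t" using P_iso[OF P] by blast
  then show "\<exists>r\<in>T. isomorphic (MaxCat C) x r" using isoM x P_max[OF P] by blast
next
  fix r r' assume "r \<in> T" "r' \<in> T"
  then show "isomorphic (MaxCat C) r r' \<longrightarrow> r = r'" using isoM P_eq[OF P] by blast
qed

lemma Max_functor: "is_functor (MaxCat C) C id id"
  unfolding is_functor_def using Max_cat cat unfolding MaxCat_def hom_def maximal_def by auto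

lemma P_final: assumes P: "uniq_arrow C T" shows "final (MaxCat C) C id id"
  unfolding final_def
proof (intro conjI ballI Max_functor)
  fix c assume c: "c \<in> Ob C"
  obtain k where k: "k \<in> Ar C" "Dom C k = c" "Cod C k \<in> T" using P_ex[OF P c] by blast
  let ?z = "(Cod C k, k)"
  have z: "?z \<in> comma_ob (MaxCat C) C id c"
    unfolding comma_ob_def MaxCat_def hom_def using k P_max[OF P] by auto
  have toz: "(x, ?z) \<in> comma_rel (MaxCat C) C id id c" if x: "x \<in> comma_ob (MaxCat C) C id c" for x
  proof -
    obtain m h where xe: "x = (m, h)" by (cases x)
    have m: "maximal C m" and h: "h \<in> Ar C" "Dom C h = c" "Cod C h = m"
      using x unfolding xe comma_ob_def MaxCat_def hom_def by auto
    have mo: "m \<in> Ob C" using m unfolding maximal_def by blast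
    obtain q where q: "q \<in> Ar C" "Dom C q = m" "Cod C q \<in> T" using P_ex[OF P mo] by blast
    have hq: "Comp C h q = k"
      using P_uniq[OF P, of "Comp C h q" k] comp[of h q] h q k by auto
    have "Cod C q = Cod C k" using comp[of h q] h q hq by auto
    then have "q \<in> hom (MaxCat C) m (Cod C k)"
      unfolding MaxCat_def hom_def using q m P_max[OF P] by auto
    then show ?thesis unfolding comma_rel_def xe using x z hq xe by auto
  qed
  show "comma_ob (MaxCat C) C id c \<noteq> {}" using z by blast
  fix x y assume x: "x \<in> comma_ob (MaxCat C) C id c" and y: "y \<in> comma_ob (MaxCat C) C id c"
  let ?R = "comma_rel (MaxCat C) C id id c"
  have "(x, ?z) \<in> (?R \<union> ?R\<inverse>)\<^sup>*" using toz[OF x] by blast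
  moreover have "(?z, y) \<in> (?R \<union> ?R\<inverse>)\<^sup>*" using toz[OF y] by blast
  ultimately show "(x, y) \<in> (?R \<union> ?R\<inverse>)\<^sup>*" by (rule rtrancl_trans)
qed

lemma exists_skel: "\<exists>R. skeleton_obs (MaxCat C) R"
proof -
  define cls where "cls x = {y. isomorphic C x y \<and> maximal C y}" for x
  define rep where "rep x = (SOME r. r \<in> cls x)" for x
  have mo: "maximal C m \<Longrightarrow> m \<in> Ob C" for m unfolding maximal_def by blast
  have rp: "isomorphic C x (rep x) \<and> maximal C (rep x)" if "maximal C x" for x
  proof -
    have "x \<in> cls x" unfolding cls_def using iso_refl mo that by blast
    then have "rep x \<in> cls x" unfolding rep_def by (rule someI)
    then show ?thesis unfolding cls_def by blast
  qed
  have ceq: "cls x = cls x'" if "isomorphic C x x'" for x x'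
    unfolding cls_def using that iso_sym iso_trans by blast
  show ?thesis
  proof (intro exI[of _ "rep ` {m. maximal C m}"])
    show "skeleton_obs (MaxCat C) (rep ` {m. maximal C m})"
      unfolding skeleton_obs_def
    proof (intro conjI ballI)
      show "rep ` {m. maximal C m} \<subseteq> Ob (MaxCat C)" using rp unfolding MaxCat_def by auto
    next
      fix x assume "x \<in> Ob (MaxCat C)"
      then have x: "maximal C x" unfolding MaxCat_def by auto
      then show "\<exists>r\<in>rep ` {m. maximal C m}. isomorphic (MaxCat C) x r" using rp isoM by blast
    next
      fix r r' assume r: "r \<in> rep ` {m. maximal C m}" and r': "r' \<in> rep ` {m. maximal C m}"
      then obtain x x' where x: "maximal C x" "r = rep x" and x': "maximal C x'" "r' = rep x'" by blast
      show "isomorphic (MaxCat C) r r' \<longrightarrow> r = r'"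
      proof
        assume "isomorphic (MaxCat C) r r'"
        then have "isomorphic C r r'" using isoM by blast
        then have "isomorphic C x x'" using rp[OF x(1)] rp[OF x'(1)] x x' iso_sym iso_trans by metis
        then show "r = r'" using ceq x x' unfolding rep_def by metis
      qed
    qed
  qed
qed

lemma skel_P: assumes F: "final (MaxCat C) C id id" and S: "skeleton_obs (MaxCat C) R"
  shows "uniq_arrow C R"
proof -
  have mo: "maximal C m \<Longrightarrow> m \<in> Ob C" for m unfolding maximal_def by blast
  have RM: "r \<in> R \<Longrightarrow> maximal C r" for r using S unfolding skeleton_obs_def MaxCat_def by auto
  have Rsk: "r = r'" if "r \<in> R" "r' \<in> R" "isomorphic C r r'" for r r'
  proof -
    have "isomorphic (MaxCat C) r r'" using isoM RM that by simp
    then show ?thesis using S that unfolding skeleton_obs_def by blast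
  qed
  have Rex: "\<exists>r\<in>R. isomorphic C x r" if x: "maximal C x" for x
  proof -
    have "x \<in> Ob (MaxCat C)" using x unfolding MaxCat_def by simp
    then obtain r where "r \<in> R" "isomorphic (MaxCat C) x r" using S unfolding skeleton_obs_def by blast
    then show ?thesis using isoM by blast
  qed
  have CO: "\<And>d h. (d, h) \<in> comma_ob (MaxCat C) C id c \<longleftrightarrow> maximal C d \<and> h \<in> Ar C \<and> Dom C h = c \<and> Cod C h = d" for c
    unfolding comma_ob_def MaxCat_def hom_def by auto
  show ?thesis unfolding uniq_arrow_def
  proof (intro conjI ballI)
    show "R \<subseteq> Ob C" using RM mo by blast
  next
    fix c assume c: "c \<in> Ob C"
    have ne: "comma_ob (MaxCat C) C id c \<noteq> {}" and conn:
      "\<And>x y. x \<in> comma_ob (MaxCat C) C id c \<Longrightarrow> y \<in> comma_ob (MaxCat C) C id c \<Longrightarrow>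
         (x, y) \<in> (comma_rel (MaxCat C) C id id c \<union> (comma_rel (MaxCat C) C id id c)\<inverse>)\<^sup>*"
      using F c unfolding final_def by blast+
    obtain m h where mh: "(m, h) \<in> comma_ob (MaxCat C) C id c" using ne by auto
    then have m: "maximal C m" and h: "h \<in> Ar C" "Dom C h = c" "Cod C h = m" using CO by auto
    obtain r where r: "r \<in> R" "isomorphic C m r" using Rex[OF m] by blast
    obtain p where p: "p \<in> Ar C" "Dom C p = m" "Cod C p = r" using r unfolding isomorphic_def hom_def by blast
    have ex: "Comp C h p \<in> Ar C \<and> Dom C (Comp C h p) = c \<and> Cod C (Comp C h p) \<in> R"
      using comp[of h p] h p r by auto
    have un: "f = g" if f: "f \<in> Ar C \<and> Dom C f = c \<and> Cod C f \<in> R"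
       and g: "g \<in> Ar C \<and> Dom C g = c \<and> Cod C g \<in> R" for f g
    proof -
      define r1 where "r1 = Cod C f"
      define r2 where "r2 = Cod C g"
      have r1: "r1 \<in> R" "maximal C r1" using f RM unfolding r1_def by auto
      have r2: "r2 \<in> R" "maximal C r2" using g RM unfolding r2_def by auto
      have in1: "(r1, f) \<in> comma_ob (MaxCat C) C id c" using CO f r1 r1_def by auto
      have in2: "(r2, g) \<in> comma_ob (MaxCat C) C id c" using CO g r2 r2_def by auto
      let ?Q = "\<lambda>q. q \<in> comma_ob (MaxCat C) C id c \<and> (\<exists>\<phi>. \<phi> \<in> Ar C \<and> Dom C \<phi> = fst q \<and> Cod C \<phi> = r1 \<and> Comp C (snd q) \<phi> = f)"
      have "?Q (r2, g)" using conn[OF in1 in2]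
      proof (induction rule: rtrancl_induct)
        case base
        have "Comp C f (Idm C r1) = f" using idr[of f] f r1_def by simp
        then show ?case using idm[OF mo[OF r1(2)]] by (intro conjI[OF in1]) auto
      next
        case (step y z)
        obtain d h where y: "y = (d, h)" by (cases y)
        obtain d' h' where z: "z = (d', h')" by (cases z)
        from step.IH obtain \<phi> where phi: "\<phi> \<in> Ar C" "Dom C \<phi> = d" "Cod C \<phi> = r1" "Comp C h \<phi> = f"
          and yin: "(d, h) \<in> comma_ob (MaxCat C) C id c" unfolding y by auto
        have dh: "maximal C d" "h \<in> Ar C" "Dom C h = c" "Cod C h = d" using yin CO by auto
        from step.hyps(2) consider "(y, z) \<in> comma_rel (MaxCat C) C id id c" | "(z, y) \<in> comma_rel (MaxCat C) C id id c"
          by blast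
        then show ?case
        proof cases
          case 1
          then have r: "((d, h), (d', h')) \<in> comma_rel (MaxCat C) C id id c" unfolding y z .
          then have r: "(d, h) \<in> comma_ob (MaxCat C) C id c \<and> (d', h') \<in> comma_ob (MaxCat C) C id c \<and> (\<exists>u\<in>hom (MaxCat C) d d'. Comp C h (id u) = h')"
            unfolding comma_rel_iff .
          then have zin: "(d', h') \<in> comma_ob (MaxCat C) C id c" by blast
          from r obtain u where "u \<in> hom (MaxCat C) d d'" "Comp C h u = h'" using r by auto
          then have u: "u \<in> Ar C" "Dom C u = d" "Cod C u = d'" "Comp C h u = h'"
            by (auto simp: hom_def MaxCat_simps)
          have d': "maximal C d'" using zin CO by auto
          have "u \<in> hom C d d'" using u unfolding hom_def by blast
          then obtain v where v: "v \<in> hom C d' d" "Comp C u v = Idm C d"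
            using max_iso[OF dh(1) d', of u] by blast
          have v': "v \<in> Ar C" "Dom C v = d'" "Cod C v = d" using v unfolding hom_def by auto
          have vp: "Comp C v \<phi> \<in> Ar C" "Dom C (Comp C v \<phi>) = d'" "Cod C (Comp C v \<phi>) = r1"
            using comp[of v \<phi>] v' phi by auto
          have "Comp C h' (Comp C v \<phi>) = Comp C h (Comp C u (Comp C v \<phi>))"
            using assoc[of h u "Comp C v \<phi>"] u dh vp by simp
          also have "\<dots> = Comp C h (Comp C (Comp C u v) \<phi>)"
            using assoc[of u v \<phi>] u v' phi by simp
          also have "\<dots> = f" using v(2) idl[of \<phi>] phi by simp
          finally show ?thesis unfolding z using vp by (intro conjI[OF zin]) auto
        next
          case 2
          then have r: "((d', h'), (d, h)) \<in> comma_rel (MaxCat C) C id id c" unfolding y z .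
          then have r: "(d', h') \<in> comma_ob (MaxCat C) C id c \<and> (d, h) \<in> comma_ob (MaxCat C) C id c \<and> (\<exists>u\<in>hom (MaxCat C) d' d. Comp C h' (id u) = h)"
            unfolding comma_rel_iff .
          then have zin: "(d', h') \<in> comma_ob (MaxCat C) C id c" by blast
          from r obtain u where "u \<in> hom (MaxCat C) d' d" "Comp C h' u = h" using r by auto
          then have u: "u \<in> Ar C" "Dom C u = d'" "Cod C u = d" "Comp C h' u = h"
            by (auto simp: hom_def MaxCat_simps)
          have h': "h' \<in> Ar C" "Cod C h' = d'" using zin CO by auto
          have up: "Comp C u \<phi> \<in> Ar C" "Dom C (Comp C u \<phi>) = d'" "Cod C (Comp C u \<phi>) = r1"
            using comp[of u \<phi>] u phi by auto
          have "Comp C h' (Comp C u \<phi>) = f"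
            using assoc[of h' u \<phi>] u h' phi by simp
          then show ?thesis unfolding z using up by (intro conjI[OF zin]) auto
        qed
      qed
      then obtain \<phi> where phi: "\<phi> \<in> Ar C" "Dom C \<phi> = r2" "Cod C \<phi> = r1" "Comp C g \<phi> = f" by auto
      obtain w where "w \<in> hom C r1 r2" "Comp C \<phi> w = Idm C r2" "Comp C w \<phi> = Idm C r1"
        using max_iso[OF r2(2) r1(2), of \<phi>] phi unfolding hom_def by auto
      then have "isomorphic C r2 r1" using phi unfolding isomorphic_def hom_def by blast
      then have e: "r2 = r1" using Rsk r1 r2 by blast
      then have "\<phi> = Idm C r1" using max_endo[OF r1(2), of \<phi>] phi unfolding hom_def by auto
      then have "Comp C g (Idm C r1) = f" using phi by simp
      moreover have "Comp C g (Idm C r1) = g" using idr[of g] g e r2_def by simp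
      ultimately show "f = g" by simp
    qed
    show "\<exists>!f. f \<in> Ar C \<and> Dom C f = c \<and> Cod C f \<in> R"
    proof (rule ex1I[of _ "Comp C h p"])
      show "Comp C h p \<in> Ar C \<and> Dom C (Comp C h p) = c \<and> Cod C (Comp C h p) \<in> R" using ex .
      fix f assume f: "f \<in> Ar C \<and> Dom C f = c \<and> Cod C f \<in> R"
      show "f = Comp C h p" using un[OF f ex] .
    qed
  qed
qed

lemma skel_large: assumes S: "skeleton_obs C R" shows "large U R \<longleftrightarrow> large U (iso_classes C)"
proof -
  define cls where "cls x = {y \<in> Ob C. isomorphic C x y}" for x
  have RO: "R \<subseteq> Ob C" and Rex: "\<And>x. x \<in> Ob C \<Longrightarrow> \<exists>r\<in>R. isomorphic C x r"
    and Ru: "\<And>r r'. r \<in> R \<Longrightarrow> r' \<in> R \<Longrightarrow> isomorphic C r r' \<Longrightarrow> r = r'"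
    using S unfolding skeleton_obs_def by blast+
  have IC: "iso_classes C = cls ` Ob C" unfolding iso_classes_def cls_def by blast
  have isoO: "isomorphic C x y \<Longrightarrow> x \<in> Ob C \<and> y \<in> Ob C" for x y
    unfolding isomorphic_def hom_def using dc by blast
  have ceq: "cls x = cls x'" if "isomorphic C x x'" for x x'
    unfolding cls_def using that iso_sym iso_trans by blast
  show ?thesis
  proof
    assume "large U R"
    then obtain e where e: "inj_on e R" "e ` R \<subseteq> U" unfolding large_def by blast
    define ch where "ch X = (SOME r. r \<in> R \<and> r \<in> X)" for X
    have chp: "ch (cls x) \<in> R \<and> isomorphic C x (ch (cls x))" if x: "x \<in> Ob C" for x
    proof -
      obtain r where "r \<in> R" "isomorphic C x r" using Rex[OF x] by blast
      then have "r \<in> R \<and> r \<in> cls x" unfolding cls_def using isoO by blast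
      then have "ch (cls x) \<in> R \<and> ch (cls x) \<in> cls x" unfolding ch_def by (rule someI)
      then show ?thesis unfolding cls_def by blast
    qed
    have ich: "inj_on ch (iso_classes C)" unfolding IC
    proof (rule inj_onI)
      fix X Y assume "X \<in> cls ` Ob C" "Y \<in> cls ` Ob C" "ch X = ch Y"
      then obtain x y where x: "x \<in> Ob C" "X = cls x" and y: "y \<in> Ob C" "Y = cls y" and eq: "ch (cls x) = ch (cls y)" by blast
      have "isomorphic C x y" using chp[OF x(1)] chp[OF y(1)] eq iso_sym iso_trans by metis
      then show "X = Y" using ceq x y by simp
    qed
    have sub: "ch ` iso_classes C \<subseteq> R" unfolding IC using chp by blast
    have "inj_on (e \<circ> ch) (iso_classes C)" by (rule comp_inj_on[OF ich inj_on_subset[OF e(1) sub]])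
    moreover have "(e \<circ> ch) ` iso_classes C \<subseteq> U" unfolding image_comp[symmetric] using e(2) sub by blast
    ultimately have "inj_on (e \<circ> ch) (iso_classes C) \<and> (e \<circ> ch) ` iso_classes C \<subseteq> U" by blast
    then show "large U (iso_classes C)" unfolding large_def by blast
  next
    assume "large U (iso_classes C)"
    then obtain e where e: "inj_on e (iso_classes C)" "e ` iso_classes C \<subseteq> U" unfolding large_def by blast
    have icl: "inj_on cls R"
    proof (rule inj_onI)
      fix r r' assume r: "r \<in> R" "r' \<in> R" "cls r = cls r'"
      have "r' \<in> cls r'" unfolding cls_def using iso_refl r RO by blast
      then have "isomorphic C r r'" using r unfolding cls_def by blast
      then show "r = r'" using Ru r by blast
    qed
    have sub: "cls ` R \<subseteq> iso_classes C" unfolding IC using RO by blast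
    have "inj_on (e \<circ> cls) R" by (rule comp_inj_on[OF icl inj_on_subset[OF e(1) sub]])
    moreover have "(e \<circ> cls) ` R \<subseteq> U" unfolding image_comp[symmetric] using e(2) sub by blast
    ultimately have "inj_on (e \<circ> cls) R \<and> (e \<circ> cls) ` R \<subseteq> U" by blast
    then show "large U R" unfolding large_def by blast
  qed
qed

lemma disc_final_P: assumes F: "final (discrete_cat S) C Fo Fa"
  shows "inj_on Fo S \<and> uniq_arrow C (Fo ` S)"
proof -
  let ?D = "discrete_cat S"
  have D: "Ob ?D = S" "Ar ?D = S" "Dom ?D = id" "Cod ?D = id" "Idm ?D = id"
    unfolding discrete_cat_def by simp_all
  have Fu: "is_functor ?D C Fo Fa" and ne: "\<And>c. c \<in> Ob C \<Longrightarrow> comma_ob ?D C Fo c \<noteq> {}"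
    and conn: "\<And>c x y. c \<in> Ob C \<Longrightarrow> x \<in> comma_ob ?D C Fo c \<Longrightarrow> y \<in> comma_ob ?D C Fo c \<Longrightarrow>
       (x, y) \<in> (comma_rel ?D C Fo Fa c \<union> (comma_rel ?D C Fo Fa c)\<inverse>)\<^sup>*"
    using F unfolding final_def by blast+
  have FoO: "s \<in> S \<Longrightarrow> Fo s \<in> Ob C" for s using Fu D unfolding is_functor_def by auto
  have FaI: "s \<in> S \<Longrightarrow> Fa s = Idm C (Fo s)" for s using Fu D unfolding is_functor_def by auto
  have CO: "(d, f) \<in> comma_ob ?D C Fo c \<longleftrightarrow> d \<in> S \<and> f \<in> Ar C \<and> Dom C f = c \<and> Cod C f = Fo d" for d f c
    unfolding comma_ob_def hom_def D by auto
  have relId: "comma_rel ?D C Fo Fa c \<subseteq> Id" for c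
  proof
    fix p assume p: "p \<in> comma_rel ?D C Fo Fa c"
    obtain d f d' f' where pe: "p = ((d, f), (d', f'))" by (metis prod.exhaust)
    have "(d, f) \<in> comma_ob ?D C Fo c \<and> (d', f') \<in> comma_ob ?D C Fo c \<and> (\<exists>u\<in>hom ?D d d'. Comp C f (Fa u) = f')"
      using p unfolding pe comma_rel_iff .
    then obtain u where f: "d \<in> S" "f \<in> Ar C" "Cod C f = Fo d" and u: "u \<in> hom ?D d d'" "Comp C f (Fa u) = f'"
      using CO by blast
    have "u = d" "u = d'" using u(1) unfolding hom_def D by auto
    then have "f' = f" using u(2) FaI f idr[of f] by simp
    then show "p \<in> Id" using pe \<open>u = d\<close> \<open>u = d'\<close> by simp
  qed
  have uniq: "x = y" if c: "c \<in> Ob C" and x: "x \<in> comma_ob ?D C Fo c" and y: "y \<in> comma_ob ?D C Fo c" for c x y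
  proof -
    have "(x, y) \<in> (comma_rel ?D C Fo Fa c \<union> (comma_rel ?D C Fo Fa c)\<inverse>)\<^sup>*" using conn[OF c x y] .
    then show ?thesis
    proof (induction rule: rtrancl_induct)
      case base then show ?case by simp
    next
      case (step y z) then show ?case using relId[of c] by auto
    qed
  qed
  have inj: "inj_on Fo S"
  proof (rule inj_onI)
    fix s s' assume s: "s \<in> S" "s' \<in> S" "Fo s = Fo s'"
    have "(s, Idm C (Fo s)) \<in> comma_ob ?D C Fo (Fo s)" "(s', Idm C (Fo s)) \<in> comma_ob ?D C Fo (Fo s)"
      using CO idm[OF FoO[OF s(1)]] s by auto
    then show "s = s'" using uniq[OF FoO[OF s(1)]] by blast
  qed
  have "uniq_arrow C (Fo ` S)" unfolding uniq_arrow_def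
  proof (intro conjI ballI)
    show "Fo ` S \<subseteq> Ob C" using FoO by blast
    fix c assume c: "c \<in> Ob C"
    obtain d f where "(d, f) \<in> comma_ob ?D C Fo c" using ne[OF c] by auto
    then have df: "d \<in> S" "f \<in> Ar C" "Dom C f = c" "Cod C f = Fo d" using CO by auto
    show "\<exists>!f. f \<in> Ar C \<and> Dom C f = c \<and> Cod C f \<in> Fo ` S"
    proof (rule ex1I[of _ f])
      show "f \<in> Ar C \<and> Dom C f = c \<and> Cod C f \<in> Fo ` S" using df by auto
      fix g assume g: "g \<in> Ar C \<and> Dom C g = c \<and> Cod C g \<in> Fo ` S"
      then obtain d' where d': "d' \<in> S" "Cod C g = Fo d'" by blast
      have "(d', g) \<in> comma_ob ?D C Fo c" "(d, f) \<in> comma_ob ?D C Fo c" using CO g d' df by auto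
      then show "g = f" using uniq[OF c] by blast
    qed
  qed
  then show ?thesis using inj by blast
qed

lemma P_disc: fixes U :: "'u set" assumes P: "uniq_arrow C T" and L: "large U T"
  shows "\<exists>(S :: 'u set) Fo Fa. large U S \<and> final (discrete_cat S) C Fo Fa"
proof -
  obtain e where e: "inj_on e T" "e ` T \<subseteq> U" using L unfolding large_def by blast
  define S where "S = e ` T"
  define Fo where "Fo = inv_into T e"
  define Fa where "Fa = (\<lambda>s. Idm C (Fo s))"
  let ?D = "discrete_cat S"
  have D: "Ob ?D = S" "Ar ?D = S" "Dom ?D = id" "Cod ?D = id" "Idm ?D = id" "Comp ?D = (\<lambda>f g. f)"
    unfolding discrete_cat_def by simp_all
  have TO: "T \<subseteq> Ob C" using P_sub[OF P] .
  have FoT: "s \<in> S \<Longrightarrow> Fo s \<in> T" for s unfolding Fo_def S_def by (rule inv_into_into)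
  have Foinj: "inj_on Fo S" unfolding Fo_def S_def by (rule inj_on_inv_into) simp
  have Foe: "t \<in> T \<Longrightarrow> Fo (e t) = t" for t unfolding Fo_def using e(1) by simp
  have largeS: "large U S" unfolding large_def S_def using e by (intro exI[of _ id]) auto
  have catD: "category ?D" unfolding category_def hom_def D by auto
  have Fu: "is_functor ?D C Fo Fa" unfolding is_functor_def
  proof (intro conjI ballI impI catD cat)
    fix x assume "x \<in> Ob ?D" then show "Fo x \<in> Ob C" using FoT TO D by auto
  next
    fix u assume "u \<in> Ar ?D"
    then have "Fo u \<in> Ob C" using FoT TO D by auto
    then show "Fa u \<in> hom C (Fo (Dom ?D u)) (Fo (Cod ?D u))" unfolding Fa_def hom_def D using idm by auto
  next
    fix x assume "x \<in> Ob ?D" then show "Fa (Idm ?D x) = Idm C (Fo x)" unfolding Fa_def D by simp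
  next
    fix u v assume "u \<in> Ar ?D" "v \<in> Ar ?D" "Cod ?D u = Dom ?D v"
    then have uv: "u = v" "u \<in> S" using D by auto
    then have "Fo u \<in> Ob C" using FoT TO by auto
    then show "Fa (Comp ?D u v) = Comp C (Fa u) (Fa v)" unfolding Fa_def D using uv idm idl by metis
  qed
  have CO: "(d, f) \<in> comma_ob ?D C Fo c \<longleftrightarrow> d \<in> S \<and> f \<in> Ar C \<and> Dom C f = c \<and> Cod C f = Fo d" for d f c
    unfolding comma_ob_def hom_def D by auto
  have "final ?D C Fo Fa" unfolding final_def
  proof (intro conjI ballI Fu)
    fix c assume c: "c \<in> Ob C"
    obtain k where k: "k \<in> Ar C" "Dom C k = c" "Cod C k \<in> T" using P_ex[OF P c] by blast
    have "(e (Cod C k), k) \<in> comma_ob ?D C Fo c" using CO k Foe S_def by auto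
    then show "comma_ob ?D C Fo c \<noteq> {}" by blast
    fix x y assume x: "x \<in> comma_ob ?D C Fo c" and y: "y \<in> comma_ob ?D C Fo c"
    obtain d f where xe: "x = (d, f)" by (cases x)
    obtain d' f' where ye: "y = (d', f')" by (cases y)
    have a: "d \<in> S" "f \<in> Ar C" "Dom C f = c" "Cod C f = Fo d" using x CO xe by auto
    have b: "d' \<in> S" "f' \<in> Ar C" "Dom C f' = c" "Cod C f' = Fo d'" using y CO ye by auto
    have "f = f'" using P_uniq[OF P, of f f'] a b FoT by auto
    then have "Fo d = Fo d'" using a b by simp
    then have "d = d'" using Foinj a b inj_onD by metis
    then have "x = y" using xe ye \<open>f = f'\<close> by simp
    then show "(x, y) \<in> (comma_rel ?D C Fo Fa c \<union> (comma_rel ?D C Fo Fa c)\<inverse>)\<^sup>*" by simp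
  qed
  then show ?thesis using largeS by blast
qed

end

lemma large_image: assumes "inj_on g S" "large U S" shows "large U (g ` S)"
proof -
  obtain e where e: "inj_on e S" "e ` S \<subseteq> U" using assms(2) unfolding large_def by blast
  have "inj_on (e \<circ> inv_into S g) (g ` S)"
    using comp_inj_on[OF inj_on_inv_into[of "g ` S" g S]] e(1) assms(1) by (simp add: inv_into_image_cancel)
  moreover have "(e \<circ> inv_into S g) ` (g ` S) \<subseteq> U" using e(2) assms(1) inv_into_into by fastforce
  ultimately show ?thesis unfolding large_def by blast
qed

theorem mainTheorem18:
  fixes C :: "('o, 'a) cat" and U :: "'u set"
  assumes "category C"
  shows "(C_discrete U C \<longleftrightarrow>
            (\<exists>(S :: 'u set) Fo Fa. large U S \<and> final (discrete_cat S) C Fo Fa))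
       \<and> (C_discrete U C \<longleftrightarrow>
            (\<exists>S. S \<subseteq> Ob C \<and> large U S \<and>
                 (\<forall>c\<in>Ob C. \<exists>!f. f \<in> Ar C \<and> Dom C f = c \<and> Cod C f \<in> S)))
       \<and> (C_discrete U C \<longrightarrow>
            (\<forall>(S :: 'u set) Fo Fa. large U S \<and> final (discrete_cat S) C Fo Fa \<longrightarrow>
                (\<exists>R. skeleton_obs (MaxCat C) R \<and> (\<exists>b. bij_betw b S R)))
          \<and> (\<forall>S. S \<subseteq> Ob C \<and> large U S \<and>
                 (\<forall>c\<in>Ob C. \<exists>!f. f \<in> Ar C \<and> Dom C f = c \<and> Cod C f \<in> S) \<longrightarrow>
                (\<exists>R. skeleton_obs (MaxCat C) R \<and> (\<exists>b. bij_betw b S R))))"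
proof -
  interpret cat_ax C using assms by (rule cat_ax.intro)
  interpret M: cat_ax "MaxCat C" using Max_cat by (rule cat_ax.intro)
  have P3: "(\<exists>S. S \<subseteq> Ob C \<and> large U S \<and> (\<forall>c\<in>Ob C. \<exists>!f. f \<in> Ar C \<and> Dom C f = c \<and> Cod C f \<in> S))
      \<longleftrightarrow> (\<exists>T. uniq_arrow C T \<and> large U T)" unfolding uniq_arrow_def by blast
  have one_three: "C_discrete U C \<longleftrightarrow> (\<exists>T. uniq_arrow C T \<and> large U T)"
  proof
    assume cd: "C_discrete U C"
    then have F: "final (MaxCat C) C id id" and L: "large U (iso_classes (MaxCat C))"
      unfolding C_discrete_def by blast+
    obtain R where R: "skeleton_obs (MaxCat C) R" using exists_skel by blast
    have "uniq_arrow C R" using skel_P[OF F R] .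
    moreover have "large U R" using M.skel_large[OF R] L by blast
    ultimately show "\<exists>T. uniq_arrow C T \<and> large U T" by blast
  next
    assume "\<exists>T. uniq_arrow C T \<and> large U T"
    then obtain T where T: "uniq_arrow C T" "large U T" by blast
    have "large U (iso_classes (MaxCat C))" using M.skel_large[OF P_skel[OF T(1)]] T(2) by blast
    then show "C_discrete U C" unfolding C_discrete_def using P_final[OF T(1)] by blast
  qed
  have two_three: "(\<exists>(S :: 'u set) Fo Fa. large U S \<and> final (discrete_cat S) C Fo Fa)
        \<longleftrightarrow> (\<exists>T. uniq_arrow C T \<and> large U T)"
  proof
    assume "\<exists>(S :: 'u set) Fo Fa. large U S \<and> final (discrete_cat S) C Fo Fa"
    then obtain S :: "'u set" and Fo Fa where "large U S" "final (discrete_cat S) C Fo Fa" by blast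
    then show "\<exists>T. uniq_arrow C T \<and> large U T" using disc_final_P large_image by blast
  next
    assume "\<exists>T. uniq_arrow C T \<and> large U T"
    then show "\<exists>(S :: 'u set) Fo Fa. large U S \<and> final (discrete_cat S) C Fo Fa" using P_disc by blast
  qed
  have m1: "\<exists>R. skeleton_obs (MaxCat C) R \<and> (\<exists>b. bij_betw b S R)"
    if "large U S" "final (discrete_cat S) C Fo Fa" for S :: "'u set" and Fo Fa
  proof -
    have "inj_on Fo S" "uniq_arrow C (Fo ` S)" using disc_final_P[OF that(2)] by blast+
    then show ?thesis using P_skel inj_on_imp_bij_betw by blast
  qed
  have m2: "\<exists>R. skeleton_obs (MaxCat C) R \<and> (\<exists>b. bij_betw b S R)"
    if "S \<subseteq> Ob C" "(\<forall>c\<in>Ob C. \<exists>!f. f \<in> Ar C \<and> Dom C f = c \<and> Cod C f \<in> S)" for S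
  proof -
    have "uniq_arrow C S" using that unfolding uniq_arrow_def by blast
    then show ?thesis using P_skel bij_betw_id by blast
  qed
  show ?thesis
  proof (intro conjI impI allI)
    show "C_discrete U C \<longleftrightarrow> (\<exists>(S :: 'u set) Fo Fa. large U S \<and> final (discrete_cat S) C Fo Fa)"
      by (subst one_three, subst two_three, rule refl)
    show "C_discrete U C \<longleftrightarrow> (\<exists>S. S \<subseteq> Ob C \<and> large U S \<and>
                 (\<forall>c\<in>Ob C. \<exists>!f. f \<in> Ar C \<and> Dom C f = c \<and> Cod C f \<in> S))"
      by (subst one_three, subst P3, rule refl)
  next
    fix S :: "'u set" and Fo Fa
    assume "large U S \<and> final (discrete_cat S) C Fo Fa"
    then show "\<exists>R. skeleton_obs (MaxCat C) R \<and> (\<exists>b. bij_betw b S R)" using m1 by blast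
  next
    fix S
    assume a: "S \<subseteq> Ob C \<and> large U S \<and> (\<forall>c\<in>Ob C. \<exists>!f. f \<in> Ar C \<and> Dom C f = c \<and> Cod C f \<in> S)"
    show "\<exists>R. skeleton_obs (MaxCat C) R \<and> (\<exists>b. bij_betw b S R)"
      by (rule m2) (use a in blast)+
  qed
qed

end
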